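(* For every integer $t\ge 1$ and every integer $r\ge 3$, $\mathrm{ex}(n,K_r,F_t)=O(n)$ as $n\to\infty$.
   Context: For graphs $H$ and $F$, $\mathrm{ex}(n,H,F)$ is the maximum number of (not necessarily induced) copies of $H$ in an $n$-vertex graph containing no subgraph isomorphic to $F$. The $t$-fan $F_t$ has vertices $u,v_1,\dots,v_t,w_1,\dots,w_t$ and edges $uv_i,uw_i,v_iw_i$ for $1\le i\le t$ ($t$ triangles sharing one vertex). $K_r$ is the complete graph on $r$ vertices. *)

theory Defs
  imports "HOL-Analysis.Analysis" "HOL-Library.Landau_Symbols"
begin

definition simple_graph_on :: "nat \<Rightarrow> nat set set \<Rightarrow> bool" where
  "simple_graph_on n E \<longleftrightarrow> (\<forall>e\<in>E. card e = 2 \<and> e \<subseteq> {..<n})"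

definition contains_subgraph :: "nat \<Rightarrow> nat set set \<Rightarrow> 'b set \<Rightarrow> 'b set set \<Rightarrow> bool" where
  "contains_subgraph n E VH EH \<longleftrightarrow>
     (\<exists>f. inj_on f VH \<and> f ` VH \<subseteq> {..<n} \<and> (\<forall>e\<in>EH. f ` e \<in> E))"

(* The t-fan F_t: centre u = 0, v_i = 2i-1, w_i = 2i for 1 <= i <= t. *)
definition fan_vertices :: "nat \<Rightarrow> nat set" where
  "fan_vertices t = {0..2*t}"

definition fan_edges :: "nat \<Rightarrow> nat set set" where
  "fan_edges t = (\<Union>i\<in>{1..t}. {{0, 2*i-1}, {0, 2*i}, {2*i-1, 2*i}})"

definition num_Kr :: "nat \<Rightarrow> nat \<Rightarrow> nat set set \<Rightarrow> nat" where
  "num_Kr r n E = card {S. S \<subseteq> {..<n} \<and> card S = r \<and>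
                           (\<forall>x\<in>S. \<forall>y\<in>S. x \<noteq> y \<longrightarrow> {x, y} \<in> E)}"

definition ex_Kr_Ft :: "nat \<Rightarrow> nat \<Rightarrow> nat \<Rightarrow> nat" where
  "ex_Kr_Ft n r t = Max {num_Kr r n E | E. simple_graph_on n E \<and>
                           \<not> contains_subgraph n E (fan_vertices t) (fan_edges t)}"

end

theory Submission
  imports Defs
begin

lemma cover_or_matching:
  assumes "\<forall>e\<in>E. card e = 2"
  shows "(\<exists>C. finite C \<and> card C \<le> 2*k \<and> (\<forall>e\<in>E. e \<inter> C \<noteq> {})) \<or>
         (\<exists>g::nat\<Rightarrow>'a. inj_on g {..<2*(k+1)} \<and> (\<forall>i<k+1. {g(2*i), g(2*i+1)} \<in> E))"
  using assms
proof (induction k arbitrary: E)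
  case 0
  show ?case
  proof (cases "E = {}")
    case True then show ?thesis by (intro disjI1 exI[of _ "{}"]) auto
  next
    case False
    then obtain e where e: "e \<in> E" by blast
    then obtain p q where pq: "e = {p,q}" "p \<noteq> q" using 0 by (meson card_2_iff)
    let ?g = "\<lambda>j::nat. if j = 0 then p else q"
    have "inj_on ?g {..<2*(0+1)}" using pq by (auto simp: inj_on_def)
    moreover have "\<forall>i<0+1. {?g(2*i), ?g(2*i+1)} \<in> E" using e pq by auto
    ultimately show ?thesis by blast
  qed
next
  case (Suc k)
  show ?case
  proof (cases "E = {}")
    case True then show ?thesis by (intro disjI1 exI[of _ "{}"]) auto
  next
    case False
    then obtain e where e: "e \<in> E" by blast
    then obtain p q where pq: "e = {p,q}" "p \<noteq> q" using Suc.prems by (meson card_2_iff)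
    define E' where "E' = {f\<in>E. f \<inter> e = {}}"
    have "\<forall>f\<in>E'. card f = 2" using Suc.prems E'_def by auto
    from Suc.IH[OF this] show ?thesis
    proof
      assume "\<exists>C. finite C \<and> card C \<le> 2*k \<and> (\<forall>f\<in>E'. f \<inter> C \<noteq> {})"
      then obtain C where C: "finite C" "card C \<le> 2*k" "\<forall>f\<in>E'. f \<inter> C \<noteq> {}" by blast
      have "finite (C \<union> e)" using C pq by auto
      moreover have "card (C \<union> e) \<le> 2 * Suc k"
      proof -
        have "card (C \<union> e) \<le> card C + card e" by (rule card_Un_le)
        also have "card e = 2" using pq by simp
        finally show ?thesis using C by simp
      qed
      moreover have "\<forall>f\<in>E. f \<inter> (C \<union> e) \<noteq> {}"
        using C(3) unfolding E'_def by blast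
      ultimately show ?thesis by blast
    next
      assume "\<exists>g::nat\<Rightarrow>'a. inj_on g {..<2*(k+1)} \<and> (\<forall>i<k+1. {g(2*i), g(2*i+1)} \<in> E')"
      then obtain g' :: "nat \<Rightarrow> 'a" where g': "inj_on g' {..<2*(k+1)}"
        "\<forall>i<k+1. {g'(2*i), g'(2*i+1)} \<in> E'" by blast
      have notin: "g' j \<notin> e" if "j < 2*(k+1)" for j
      proof -
        have i: "j div 2 < k+1" using that by simp
        have "{g'(2*(j div 2)), g'(2*(j div 2)+1)} \<in> E'" using g'(2) i by blast
        hence "{g'(2*(j div 2)), g'(2*(j div 2)+1)} \<inter> e = {}" unfolding E'_def by blast
        moreover have "j = 2*(j div 2) \<or> j = 2*(j div 2)+1" by presburger
        ultimately show ?thesis by auto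
      qed
      define g where "g = (\<lambda>j::nat. if j = 0 then p else if j = 1 then q else g' (j-2))"
      have "inj_on g {..<2*(Suc k+1)}"
      proof (rule inj_onI)
        fix x y assume x: "x \<in> {..<2*(Suc k+1)}" and y: "y \<in> {..<2*(Suc k+1)}" and eq: "g x = g y"
        have A: "x \<ge> 2 \<Longrightarrow> g x = g' (x-2) \<and> x - 2 < 2*(k+1)" using x by (simp add: g_def)
        have B: "y \<ge> 2 \<Longrightarrow> g y = g' (y-2) \<and> y - 2 < 2*(k+1)" using y by (simp add: g_def)
        show "x = y"
        proof (cases "x \<ge> 2")
          case True
          note a = A[OF True]
          show ?thesis
          proof (cases "y \<ge> 2")
            case True
            note b = B[OF True]
            have "x - 2 = y - 2" using g'(1) a b eq by (auto simp: inj_on_def)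
            then show ?thesis using \<open>x \<ge> 2\<close> True by simp
          next
            case False
            then have "g y \<in> e" using pq by (auto simp: g_def)
            then show ?thesis using a notin eq by auto
          qed
        next
          case False
          note xF = False
          then have gx: "g x \<in> e" using pq by (auto simp: g_def)
          show ?thesis
          proof (cases "y \<ge> 2")
            case True
            then show ?thesis using B notin eq gx by metis
          next
            case False
            then show ?thesis using xF eq pq by (auto simp: g_def split: if_splits)
          qed
        qed
      qed
      moreover have "\<forall>i<Suc k+1. {g(2*i), g(2*i+1)} \<in> E"
      proof (intro allI impI)
        fix i assume i: "i < Suc k + 1"
        show "{g(2*i), g(2*i+1)} \<in> E"
        proof (cases i)
          case 0 then show ?thesis using e pq by (simp add: g_def)
        next
          case (Suc i')
          then have "{g'(2*i'), g'(2*i'+1)} \<in> E'" using g'(2) i by simp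
          moreover have "g (2*i) = g'(2*i')" "g(2*i+1) = g'(2*i'+1)" using Suc by (simp_all add: g_def)
          ultimately show ?thesis unfolding E'_def by auto
        qed
      qed
      ultimately show ?thesis by blast
    qed
  qed
qed


lemma fan_from_matching:
  assumes t: "t \<ge> 1" and G: "simple_graph_on n E" and y: "y < n"
    and g: "inj_on g {..<2*t}" "\<forall>i<t. {g(2*i), g(2*i+1)} \<in> {e\<in>E. e \<subseteq> {z. {y,z} \<in> E}}"
  shows "contains_subgraph n E (fan_vertices t) (fan_edges t)"
proof -
  let ?N = "{z. {y,z} \<in> E}"
  have gN: "g j \<in> ?N" if "j < 2*t" for j
  proof -
    define i where "i = j div 2"
    have i: "i < t" using that i_def by simp
    have "{g(2*i), g(2*i+1)} \<in> {e\<in>E. e \<subseteq> ?N}" using g(2) i by simp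
    hence s: "g(2*i) \<in> ?N" "g(2*i+1) \<in> ?N" by auto
    have "j = 2*i \<or> j = 2*i+1" unfolding i_def by presburger
    thus ?thesis using s by auto
  qed
  have Nn: "?N \<subseteq> {..<n}"
  proof
    fix z assume "z \<in> ?N"
    then have "{y,z} \<in> E" by simp
    then have "{y,z} \<subseteq> {..<n}" by (rule conjunct2[OF bspec[OF G[unfolded simple_graph_on_def]]])
    then show "z \<in> {..<n}" by (simp only: insert_subset)
  qed
  have yN: "y \<notin> ?N"
  proof
    assume "y \<in> ?N"
    then have "card {y,y} = 2" using G unfolding simple_graph_on_def by blast
    then show False by simp
  qed
  define f where "f = (\<lambda>j::nat. if j = 0 then y else g (j-1))"
  have "inj_on f (fan_vertices t)"
  proof (rule inj_onI)
    fix a b assume a: "a \<in> fan_vertices t" and b: "b \<in> fan_vertices t" and eq: "f a = f b"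
    have a': "a \<noteq> 0 \<Longrightarrow> a - 1 < 2*t" and b': "b \<noteq> 0 \<Longrightarrow> b - 1 < 2*t"
      using a b unfolding fan_vertices_def by auto
    show "a = b"
    proof (cases "a = 0"; cases "b = 0")
      assume "a = 0" "b = 0" then show ?thesis by simp
    next
      assume "a = 0" "b \<noteq> 0" then show ?thesis using eq gN[OF b'] yN by (simp add: f_def)
    next
      assume "a \<noteq> 0" "b = 0" then show ?thesis using eq gN[OF a'] yN by (simp add: f_def)
    next
      assume "a \<noteq> 0" "b \<noteq> 0"
      then have "a - 1 = b - 1" using eq g(1) a' b' by (auto simp: f_def inj_on_def)
      then show ?thesis using \<open>a \<noteq> 0\<close> \<open>b \<noteq> 0\<close> by simp
    qed
  qed
  moreover have "f ` fan_vertices t \<subseteq> {..<n}"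
  proof
    fix z assume "z \<in> f ` fan_vertices t"
    then obtain a where a: "a \<in> fan_vertices t" "z = f a" by blast
    show "z \<in> {..<n}"
    proof (cases "a = 0")
      case True then show ?thesis using a y by (simp add: f_def)
    next
      case False
      then have "a - 1 < 2*t" using a unfolding fan_vertices_def by auto
      then show ?thesis using a False gN Nn by (auto simp: f_def)
    qed
  qed
  moreover have "\<forall>e\<in>fan_edges t. f ` e \<in> E"
  proof
    fix e assume "e \<in> fan_edges t"
    then obtain i where i: "i \<in> {1..t}" and e: "e \<in> {{0, 2*i-1}, {0, 2*i}, {2*i-1, 2*i}}"
      unfolding fan_edges_def by blast
    obtain i' where i': "i = Suc i'" using i by (cases i) auto
    have f1: "f (2*i-1) = g (2*(i-1))" using i' by (simp add: f_def)
    have f2: "f (2*i) = g (2*(i-1)+1)" using i' by (simp add: f_def)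
    have f0: "f 0 = y" by (simp add: f_def)
    have E1: "{g(2*(i-1)), g(2*(i-1)+1)} \<in> E" using g(2) i by auto
    have E2: "{y, g(2*(i-1))} \<in> E" using gN[of "2*(i-1)"] i by auto
    have E3: "{y, g(2*(i-1)+1)} \<in> E" using gN[of "2*(i-1)+1"] i by auto
    show "f ` e \<in> E" using e f0 f1 f2 E1 E2 E3 by auto
  qed
  ultimately show ?thesis unfolding contains_subgraph_def by blast
qed

lemma num_Kr_bound:
  assumes t: "t \<ge> 1" and r: "r \<ge> 3" and G: "simple_graph_on n E"
    and free: "\<not> contains_subgraph n E (fan_vertices t) (fan_edges t)"
  shows "num_Kr r n E \<le> n * 2^(1 + 2*(t-1) + 2*(t-1)*(2*(t-1)))"
proof -
  define m where "m = 2*(t-1)"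
  define Ey where "Ey y = {e\<in>E. e \<subseteq> {z. {y,z} \<in> E}}" for y
  have cov: "\<exists>C. finite C \<and> card C \<le> m \<and> (\<forall>e\<in>Ey y. e \<inter> C \<noteq> {})" if y: "y < n" for y
  proof -
    have "\<forall>e\<in>Ey y. card e = 2" using G unfolding Ey_def simple_graph_on_def by auto
    from cover_or_matching[OF this, of "t-1"] show ?thesis
    proof
      assume "\<exists>g::nat\<Rightarrow>nat. inj_on g {..<2*(t-1+1)} \<and> (\<forall>i<t-1+1. {g(2*i), g(2*i+1)} \<in> Ey y)"
      then obtain g :: "nat \<Rightarrow> nat" where "inj_on g {..<2*t}" "\<forall>i<t. {g(2*i), g(2*i+1)} \<in> Ey y"
        using t by auto
      then have "contains_subgraph n E (fan_vertices t) (fan_edges t)"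
        using fan_from_matching[OF t G y] unfolding Ey_def by blast
      then show ?thesis using free by blast
    qed (simp add: m_def)
  qed
  define C where "C y = (if y < n then (SOME C. finite C \<and> card C \<le> m \<and> (\<forall>e\<in>Ey y. e \<inter> C \<noteq> {})) else {})" for y
  have Cfin: "finite (C y) \<and> card (C y) \<le> m" for y
  proof (cases "y < n")
    case True
    from someI_ex[OF cov[OF True]] show ?thesis using True by (simp add: C_def)
  qed (simp add: C_def)
  have Ccov: "\<forall>e\<in>Ey y. e \<inter> C y \<noteq> {}" if "y < n" for y
    using someI_ex[OF cov[OF that]] that by (simp add: C_def)
  define D where "D x = insert x (C x \<union> (\<Union>a\<in>C x. C a))" for x
  have Dcard: "card (D x) \<le> 1 + m + m*m" for x
  proof -
    have "card (\<Union>a\<in>C x. C a) \<le> (\<Sum>a\<in>C x. card (C a))" by (rule card_UN_le) (use Cfin in auto)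
    also have "\<dots> \<le> card (C x) * m" using sum_bounded_above[of "C x" "\<lambda>a. card (C a)" m] Cfin by simp
    also have "\<dots> \<le> m * m" using Cfin by simp
    finally have U: "card (\<Union>a\<in>C x. C a) \<le> m*m" .
    have "card (D x) \<le> Suc (card (C x \<union> (\<Union>a\<in>C x. C a)))" unfolding D_def using Cfin by (simp add: card_insert_if)
    moreover have "card (C x \<union> (\<Union>a\<in>C x. C a)) \<le> card (C x) + card (\<Union>a\<in>C x. C a)" by (rule card_Un_le)
    ultimately show ?thesis using U Cfin[of x] by linarith
  qed
  have Dfin: "finite (D x)" for x unfolding D_def using Cfin by auto
  have key: "\<exists>x\<in>S. S \<subseteq> D x"
    if S: "S \<subseteq> {..<n}" "card S = r" "\<forall>x\<in>S. \<forall>y\<in>S. x \<noteq> y \<longrightarrow> {x, y} \<in> E" for S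
  proof (rule ccontr)
    assume nk: "\<not> (\<exists>x\<in>S. S \<subseteq> D x)"
    have uniq: "p = q" if "y \<in> S" "p \<in> S" "q \<in> S" "p \<noteq> y" "q \<noteq> y" "p \<notin> C y" "q \<notin> C y" for y p q
    proof (rule ccontr)
      assume "p \<noteq> q"
      have e1: "{p,q} \<in> E" using S(3) that(2,3) \<open>p \<noteq> q\<close> by blast
      have e2: "{y,p} \<in> E" using S(3) that(1,2,4) by metis
      have e3: "{y,q} \<in> E" using S(3) that(1,3,5) by metis
      have "{p,q} \<in> Ey y" using e1 e2 e3 unfolding Ey_def by simp
      moreover have "y < n" using that(1) S(1) by auto
      ultimately have "{p,q} \<inter> C y \<noteq> {}" using Ccov by blast
      then show False using that(6,7) by simp
    qed
    have badx: "\<exists>b\<in>S. b \<noteq> x \<and> b \<notin> C x \<and> (\<forall>a\<in>S. a \<noteq> x \<longrightarrow> a \<noteq> b \<longrightarrow> b \<notin> C a)" if x: "x \<in> S" for x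
    proof -
      have "\<not> S \<subseteq> D x" using nk x by metis
      then obtain b where b: "b \<in> S" "b \<notin> D x" by (meson subsetI)
      then have bx: "b \<noteq> x" "b \<notin> C x" unfolding D_def by auto
      have "b \<notin> C a" if "a \<in> S" "a \<noteq> x" "a \<noteq> b" for a
      proof
        assume "b \<in> C a"
        have "a \<in> C x" using uniq[OF x that(1) b(1) that(2) bx(1) _ bx(2)] that(3) by blast
        then show False using b(2) \<open>b \<in> C a\<close> unfolding D_def by blast
      qed
      then show ?thesis using b bx by blast
    qed
    have "S \<noteq> {}" using S(2) r by auto
    then obtain y0 where y0: "y0 \<in> S" by blast
    obtain b where b: "b \<in> S" "b \<noteq> y0" "b \<notin> C y0" "\<forall>a\<in>S. a \<noteq> y0 \<longrightarrow> a \<noteq> b \<longrightarrow> b \<notin> C a"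
      using badx[OF y0] by blast
    have "S - {y0, b} \<noteq> {}"
    proof
      assume "S - {y0, b} = {}"
      then have "S \<subseteq> {y0, b}" by blast
      then have "card S \<le> card {y0, b}" by (intro card_mono) auto
      also have "\<dots> \<le> 2" by (simp add: card_insert_if)
      finally show False using S(2) r by simp
    qed
    then obtain a where a: "a \<in> S" "a \<noteq> y0" "a \<noteq> b" by blast
    have ba: "b \<notin> C a" using b(4) a by blast
    obtain c where c: "c \<in> S" "c \<noteq> b" "c \<notin> C b" "\<forall>z\<in>S. z \<noteq> b \<longrightarrow> z \<noteq> c \<longrightarrow> c \<notin> C z"
      using badx[OF b(1)] by blast
    show False
    proof (cases "c = y0")
      case False
      then have "c \<notin> C y0" using c(4) y0 b(2) by metis
      then have "c = b" using uniq[OF y0 c(1) b(1) False b(2)] b(3) by blast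
      then show False using c(2) by simp
    next
      case True
      then have "c \<notin> C a" using c(4) a by metis
      then have "c = b" using uniq[OF a(1) c(1) b(1) _ _ _ ba] True a by metis
      then show False using c(2) by simp
    qed
  qed
  let ?K = "{S. S \<subseteq> {..<n} \<and> card S = r \<and> (\<forall>x\<in>S. \<forall>y\<in>S. x \<noteq> y \<longrightarrow> {x, y} \<in> E)}"
  have sub: "?K \<subseteq> (\<Union>x\<in>{..<n}. Pow (D x))"
  proof
    fix S assume "S \<in> ?K"
    then have "S \<subseteq> {..<n}" "card S = r" "\<forall>x\<in>S. \<forall>y\<in>S. x \<noteq> y \<longrightarrow> {x, y} \<in> E" by auto
    from key[OF this] obtain x where "x \<in> S" "S \<subseteq> D x" by blast
    then show "S \<in> (\<Union>x\<in>{..<n}. Pow (D x))" using \<open>S \<subseteq> {..<n}\<close> by blast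
  qed
  have "num_Kr r n E \<le> card (\<Union>x\<in>{..<n}. Pow (D x))"
    unfolding num_Kr_def by (rule card_mono[OF _ sub]) (use Dfin in auto)
  also have "\<dots> \<le> (\<Sum>x<n. card (Pow (D x)))" by (rule card_UN_le) simp
  also have "\<dots> = (\<Sum>x<n. 2 ^ card (D x))" using Dfin by (simp add: card_Pow)
  also have "\<dots> \<le> (\<Sum>x<n. (2::nat) ^ (1 + m + m*m))"
    by (intro sum_mono power_increasing Dcard) auto
  also have "\<dots> = n * 2 ^ (1 + m + m*m)" by simp
  finally show ?thesis unfolding m_def .
qed

theorem proposition3:
  fixes t r :: nat
  assumes "t \<ge> 1" and "r \<ge> 3"
  shows "(\<lambda>n. real (ex_Kr_Ft n r t)) \<in> O(\<lambda>n. real n)"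
proof -
  define K :: nat where "K = 2^(1 + 2*(t-1) + 2*(t-1)*(2*(t-1)))"
  have bound: "ex_Kr_Ft n r t \<le> n * K" for n
  proof -
    let ?A = "{num_Kr r n E | E. simple_graph_on n E \<and>
                           \<not> contains_subgraph n E (fan_vertices t) (fan_edges t)}"
    have A: "?A \<subseteq> {..n*K}" using num_Kr_bound[OF assms] unfolding K_def by auto
    have "\<not> contains_subgraph n {} (fan_vertices t) (fan_edges t)"
    proof
      assume "contains_subgraph n {} (fan_vertices t) (fan_edges t)"
      moreover have "{0, 2*1-1} \<in> fan_edges t" using assms(1) unfolding fan_edges_def by force
      ultimately show False unfolding contains_subgraph_def by blast
    qed
    then have "num_Kr r n {} \<in> ?A" unfolding simple_graph_on_def by blast
    then have ne: "?A \<noteq> {}" by blast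
    have "finite ?A" using A finite_subset by blast
    then have "Max ?A \<in> ?A" using ne by (rule Max_in)
    then show ?thesis unfolding ex_Kr_Ft_def using A by auto
  qed
  show ?thesis
  proof (rule bigoI[where c = "real K"])
    show "\<forall>\<^sub>F x in at_top. norm (real (ex_Kr_Ft x r t)) \<le> real K * norm (real x)"
    proof (rule always_eventually, rule allI)
      fix x
      have "real (ex_Kr_Ft x r t) \<le> real (x * K)" using bound by (simp only: of_nat_le_iff)
      then show "norm (real (ex_Kr_Ft x r t)) \<le> real K * norm (real x)" by (simp add: mult.commute)
    qed
  qed
qed

end
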